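(* Let $\Delta$ be a thick building with Weyl group $W$, and let $G$ be a group acting strongly transitively on $\Delta$ with respect to the complete apartment system $\overline{\mathcal{A}}$. Fix an apartment $\Sigma_0\in\overline{\mathcal{A}}$, let $N=\mathrm{Stab}_G(\Sigma_0)$ and $T=\{t\in N \mid tC=C \text{ for all chambers } C \text{ of } \Sigma_0\}$. Then for a subgroup $H$ of $G$ the following are equivalent: (i) $H$ acts weakly transitively on $\Delta$; (ii) there exists $g\in G$ such that $g(nT)g^{-1}\cap H\neq\emptyset$ for all $n\in N$.
   Context: For a thick building $\Delta$ with Coxeter system $(W,S)$ of finite rank, $\overline{\mathcal{A}}$ denotes its complete system of apartments. A subset $\mathcal{A}\subseteq\overline{\mathcal{A}}$ is a system of apartments if any two chambers lie in a common apartment of $\mathcal{A}$. A type-preserving action of a group $H$ on $\Delta$ is strongly transitive with respect to $\mathcal{A}$ if $H$ acts transitively on $\{(C,\Sigma)\mid \Sigma\in\mathcal{A},\ C \text{ a chamber of }\Sigma\}$. A type-preserving action of $H$ on $\Delta$ is called weakly transitive if there exists an apartment $\Sigma\in\overline{\mathcal{A}}$ such that $\mathrm{Stab}_H(\Sigma)$ acts transitively on the chambers of $\Sigma$. (Note $N/T$ identifies with $W$, the type-preserving automorphism group of $\Sigma_0$.) *)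

theory Defs
  imports "HOL-Algebra.Group_Action"
begin

definition wprod :: "('w, 'b) monoid_scheme \<Rightarrow> 'w list \<Rightarrow> 'w" where
  "wprod W ws = foldr (\<lambda>s w. s \<otimes>\<^bsub>W\<^esub> w) ws \<one>\<^bsub>W\<^esub>"

definition cox_length :: "('w, 'b) monoid_scheme \<Rightarrow> 'w set \<Rightarrow> 'w \<Rightarrow> nat" where
  "cox_length W S w = (LEAST n. \<exists>ws. set ws \<subseteq> S \<and> length ws = n \<and> wprod W ws = w)"

text \<open>Coxeter system, characterised (as in Bourbaki) by the exchange condition.\<close>
definition coxeter_system :: "('w, 'b) monoid_scheme \<Rightarrow> 'w set \<Rightarrow> bool" where
  "coxeter_system W S \<longleftrightarrow> group W \<and> finite S \<and> S \<subseteq> carrier W \<and> \<one>\<^bsub>W\<^esub> \<notin> S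
    \<and> (\<forall>s\<in>S. s \<otimes>\<^bsub>W\<^esub> s = \<one>\<^bsub>W\<^esub>)
    \<and> (\<forall>w\<in>carrier W. \<exists>ws. set ws \<subseteq> S \<and> wprod W ws = w)
    \<and> (\<forall>ws s. set ws \<subseteq> S \<longrightarrow> s \<in> S \<longrightarrow> length ws = cox_length W S (wprod W ws)
         \<longrightarrow> cox_length W S (s \<otimes>\<^bsub>W\<^esub> wprod W ws) \<le> cox_length W S (wprod W ws)
         \<longrightarrow> (\<exists>i<length ws. s \<otimes>\<^bsub>W\<^esub> wprod W ws = wprod W (take i ws @ drop (Suc i) ws)))"

definition building ::
  "('w, 'b) monoid_scheme \<Rightarrow> 'w set \<Rightarrow> 'c set \<Rightarrow> ('c \<Rightarrow> 'c \<Rightarrow> 'w) \<Rightarrow> bool" where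
  "building W S Ch \<delta> \<longleftrightarrow> coxeter_system W S \<and> Ch \<noteq> {}
    \<and> (\<forall>C\<in>Ch. \<forall>D\<in>Ch. \<delta> C D \<in> carrier W)
    \<and> (\<forall>C\<in>Ch. \<forall>D\<in>Ch. \<delta> C D = \<one>\<^bsub>W\<^esub> \<longleftrightarrow> C = D)
    \<and> (\<forall>C\<in>Ch. \<forall>D\<in>Ch. \<forall>C'\<in>Ch. \<forall>s\<in>S. \<delta> C' C = s \<longrightarrow>
         \<delta> C' D \<in> {s \<otimes>\<^bsub>W\<^esub> \<delta> C D, \<delta> C D}
         \<and> (cox_length W S (s \<otimes>\<^bsub>W\<^esub> \<delta> C D) = cox_length W S (\<delta> C D) + 1
              \<longrightarrow> \<delta> C' D = s \<otimes>\<^bsub>W\<^esub> \<delta> C D))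
    \<and> (\<forall>C\<in>Ch. \<forall>D\<in>Ch. \<forall>s\<in>S. \<exists>C'\<in>Ch. \<delta> C' C = s \<and> \<delta> C' D = s \<otimes>\<^bsub>W\<^esub> \<delta> C D)"

definition thick_building ::
  "('w, 'b) monoid_scheme \<Rightarrow> 'w set \<Rightarrow> 'c set \<Rightarrow> ('c \<Rightarrow> 'c \<Rightarrow> 'w) \<Rightarrow> bool" where
  "thick_building W S Ch \<delta> \<longleftrightarrow> building W S Ch \<delta>
    \<and> (\<forall>C\<in>Ch. \<forall>s\<in>S. \<exists>D1 D2 D3. {D1, D2, D3} \<subseteq> {D\<in>Ch. \<delta> C D \<in> {\<one>\<^bsub>W\<^esub>, s}}
          \<and> D1 \<noteq> D2 \<and> D1 \<noteq> D3 \<and> D2 \<noteq> D3)"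

text \<open>Apartments of the complete apartment system: images of isometries W \<rightarrow> Delta.
  An apartment is represented by its set of chambers.\<close>
definition is_apartment ::
  "('w, 'b) monoid_scheme \<Rightarrow> 'c set \<Rightarrow> ('c \<Rightarrow> 'c \<Rightarrow> 'w) \<Rightarrow> 'c set \<Rightarrow> bool" where
  "is_apartment W Ch \<delta> \<Sigma> \<longleftrightarrow> (\<exists>f. f \<in> carrier W \<rightarrow> Ch \<and> \<Sigma> = f ` carrier W
     \<and> (\<forall>u\<in>carrier W. \<forall>v\<in>carrier W. \<delta> (f u) (f v) = inv\<^bsub>W\<^esub> u \<otimes>\<^bsub>W\<^esub> v))"

definition type_preserving_action ::
  "('g, 'e) monoid_scheme \<Rightarrow> 'c set \<Rightarrow> ('c \<Rightarrow> 'c \<Rightarrow> 'w) \<Rightarrow> ('g \<Rightarrow> 'c \<Rightarrow> 'c) \<Rightarrow> bool" where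
  "type_preserving_action G Ch \<delta> act \<longleftrightarrow> group_action G Ch act
    \<and> (\<forall>g\<in>carrier G. \<forall>C\<in>Ch. \<forall>D\<in>Ch. \<delta> (act g C) (act g D) = \<delta> C D)"

definition strongly_transitive ::
  "('w, 'b) monoid_scheme \<Rightarrow> 'c set \<Rightarrow> ('c \<Rightarrow> 'c \<Rightarrow> 'w) \<Rightarrow> ('g \<Rightarrow> 'c \<Rightarrow> 'c) \<Rightarrow> 'g set \<Rightarrow> bool" where
  "strongly_transitive W Ch \<delta> act H \<longleftrightarrow>
    (\<forall>\<Sigma>1 \<Sigma>2 C1 C2. is_apartment W Ch \<delta> \<Sigma>1 \<longrightarrow> is_apartment W Ch \<delta> \<Sigma>2 \<longrightarrow> C1 \<in> \<Sigma>1 \<longrightarrow> C2 \<in> \<Sigma>2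
       \<longrightarrow> (\<exists>h\<in>H. act h ` \<Sigma>1 = \<Sigma>2 \<and> act h C1 = C2))"

definition apt_stab :: "('g \<Rightarrow> 'c \<Rightarrow> 'c) \<Rightarrow> 'g set \<Rightarrow> 'c set \<Rightarrow> 'g set" where
  "apt_stab act H \<Sigma> = {h\<in>H. act h ` \<Sigma> = \<Sigma>}"

definition weakly_transitive ::
  "('w, 'b) monoid_scheme \<Rightarrow> 'c set \<Rightarrow> ('c \<Rightarrow> 'c \<Rightarrow> 'w) \<Rightarrow> ('g \<Rightarrow> 'c \<Rightarrow> 'c) \<Rightarrow> 'g set \<Rightarrow> bool" where
  "weakly_transitive W Ch \<delta> act H \<longleftrightarrow>
    (\<exists>\<Sigma>. is_apartment W Ch \<delta> \<Sigma> \<and> (\<forall>C\<in>\<Sigma>. \<forall>D\<in>\<Sigma>. \<exists>h\<in>apt_stab act H \<Sigma>. act h C = D))"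

definition apt_fix :: "('g \<Rightarrow> 'c \<Rightarrow> 'c) \<Rightarrow> 'g set \<Rightarrow> 'c set \<Rightarrow> 'g set" where
  "apt_fix act H \<Sigma> = {t\<in>apt_stab act H \<Sigma>. \<forall>C\<in>\<Sigma>. act t C = C}"

end

theory Submission
  imports Defs
begin

lemma apt_sub: assumes "is_apartment W Ch \<delta> \<Sigma>" shows "\<Sigma> \<subseteq> Ch"
proof -
  obtain f where "f \<in> carrier W \<rightarrow> Ch" "\<Sigma> = f ` carrier W"
    using assms unfolding is_apartment_def by blast
  then show ?thesis using funcset_image by metis
qed

lemma apt_ne: assumes "group W" "is_apartment W Ch \<delta> \<Sigma>" shows "\<exists>C. C \<in> \<Sigma>"
proof -
  obtain f where "\<Sigma> = f ` carrier W"
    using assms(2) unfolding is_apartment_def by blast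
  moreover have "\<one>\<^bsub>W\<^esub> \<in> carrier W" using assms(1) by (simp add: group.is_monoid monoid.one_closed)
  ultimately show ?thesis by blast
qed

lemma apt_inj:
  assumes "group W" "is_apartment W Ch \<delta> \<Sigma>" "C \<in> \<Sigma>" "D \<in> \<Sigma>" "D' \<in> \<Sigma>"
    "\<delta> C D = \<delta> C D'"
  shows "D = D'"
proof -
  interpret group W by fact
  obtain f where f: "\<Sigma> = f ` carrier W"
    "\<forall>u\<in>carrier W. \<forall>v\<in>carrier W. \<delta> (f u) (f v) = inv\<^bsub>W\<^esub> u \<otimes>\<^bsub>W\<^esub> v"
    using assms(2) unfolding is_apartment_def by blast
  obtain u v v' where uv: "u \<in> carrier W" "v \<in> carrier W" "v' \<in> carrier W"
    "C = f u" "D = f v" "D' = f v'" using assms(3-5) f(1) by blast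
  have "inv\<^bsub>W\<^esub> u \<otimes>\<^bsub>W\<^esub> v = inv\<^bsub>W\<^esub> u \<otimes>\<^bsub>W\<^esub> v'" using assms(6) f(2) uv by auto
  then have "v = v'" using uv by simp
  then show ?thesis using uv by simp
qed

lemma img_comp:
  assumes "group_action G Ch act" "a \<in> carrier G" "b \<in> carrier G" "A \<subseteq> Ch"
  shows "act (a \<otimes>\<^bsub>G\<^esub> b) ` A = act a ` act b ` A"
proof -
  have "act (a \<otimes>\<^bsub>G\<^esub> b) ` A = (\<lambda>x. act a (act b x)) ` A"
    using group_action.composition_rule[OF assms(1) _ assms(2,3)] assms(4) by (intro image_cong) auto
  then show ?thesis by (simp add: image_image)
qed

lemma img_inv:
  assumes "group_action G Ch act" "a \<in> carrier G" "A \<subseteq> Ch" "act a ` A = B"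
  shows "act (inv\<^bsub>G\<^esub> a) ` B = A"
proof -
  have "\<And>x. x \<in> A \<Longrightarrow> act (inv\<^bsub>G\<^esub> a) (act a x) = x"
    using group_action.orbit_sym_aux[OF assms(1) assms(2)] assms(3) by blast
  then show ?thesis using assms(4) by (force simp: image_image)
qed

lemma img_sub:
  assumes "group_action G Ch act" "a \<in> carrier G" "A \<subseteq> Ch"
  shows "act a ` A \<subseteq> Ch"
  using group_action.element_image[OF assms(1) assms(2)] assms(3) by blast

theorem lemma2p3:
  fixes W :: "('w, 'b) monoid_scheme" and S :: "'w set"
    and Ch :: "'c set" and \<delta> :: "'c \<Rightarrow> 'c \<Rightarrow> 'w"
    and G :: "('g, 'e) monoid_scheme" and act :: "'g \<Rightarrow> 'c \<Rightarrow> 'c"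
    and \<Sigma>0 :: "'c set" and H :: "'g set"
  assumes "thick_building W S Ch \<delta>"
    and "type_preserving_action G Ch \<delta> act"
    and "strongly_transitive W Ch \<delta> act (carrier G)"
    and "is_apartment W Ch \<delta> \<Sigma>0"
    and "subgroup H G"
  shows "weakly_transitive W Ch \<delta> act H \<longleftrightarrow>
    (\<exists>g\<in>carrier G. \<forall>n\<in>apt_stab act (carrier G) \<Sigma>0.
       ((g <#\<^bsub>G\<^esub> (n <#\<^bsub>G\<^esub> apt_fix act (carrier G) \<Sigma>0)) #>\<^bsub>G\<^esub> inv\<^bsub>G\<^esub> g) \<inter> H \<noteq> {})"
proof -
  have cW: "coxeter_system W S" using assms(1) unfolding thick_building_def building_def by blast
  have gW: "group W" using coxeter_system_def[THEN iffD1, OF cW] by (rule conjunct1)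
  have ga: "group_action G Ch act" and tp: "\<forall>g\<in>carrier G. \<forall>C\<in>Ch. \<forall>D\<in>Ch. \<delta> (act g C) (act g D) = \<delta> C D"
    using assms(2) unfolding type_preserving_action_def by auto
  interpret group G using ga unfolding group_action_def using group_hom.axioms(1) by blast
  have HG: "H \<subseteq> carrier G" using assms(5) subgroup.subset by blast
  have S0: "\<Sigma>0 \<subseteq> Ch" using apt_sub assms(4) by blast
  have ST: "\<And>\<Sigma>1 \<Sigma>2 C1 C2. is_apartment W Ch \<delta> \<Sigma>1 \<Longrightarrow> is_apartment W Ch \<delta> \<Sigma>2 \<Longrightarrow> C1 \<in> \<Sigma>1 \<Longrightarrow> C2 \<in> \<Sigma>2
       \<Longrightarrow> (\<exists>h\<in>carrier G. act h ` \<Sigma>1 = \<Sigma>2 \<and> act h C1 = C2)"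
    using assms(3) unfolding strongly_transitive_def by blast
  have cr: "\<And>a b x. x \<in> Ch \<Longrightarrow> a \<in> carrier G \<Longrightarrow> b \<in> carrier G \<Longrightarrow> act (a \<otimes>\<^bsub>G\<^esub> b) x = act a (act b x)"
    using group_action.composition_rule[OF ga] by blast
  have ei: "\<And>a x. a \<in> carrier G \<Longrightarrow> x \<in> Ch \<Longrightarrow> act a x \<in> Ch"
    using group_action.element_image[OF ga] by blast
  have ia: "\<And>a x. a \<in> carrier G \<Longrightarrow> x \<in> Ch \<Longrightarrow> act (inv\<^bsub>G\<^esub> a) (act a x) = x"
    using group_action.orbit_sym_aux[OF ga] by blast
  show ?thesis
  proof
    assume "weakly_transitive W Ch \<delta> act H"
    then obtain \<Sigma> where A: "is_apartment W Ch \<delta> \<Sigma>"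
      and tr: "\<forall>C\<in>\<Sigma>. \<forall>D\<in>\<Sigma>. \<exists>h\<in>apt_stab act H \<Sigma>. act h C = D"
      unfolding weakly_transitive_def by blast
    have SS: "\<Sigma> \<subseteq> Ch" using apt_sub A by blast
    obtain C where C: "C \<in> \<Sigma>0" using apt_ne[OF gW assms(4)] by blast
    obtain C' where C': "C' \<in> \<Sigma>" using apt_ne[OF gW A] by blast
    obtain g where g: "g \<in> carrier G" "act g ` \<Sigma>0 = \<Sigma>" using ST[OF assms(4) A C C'] by blast
    have gi: "act (inv\<^bsub>G\<^esub> g) ` \<Sigma> = \<Sigma>0" using img_inv[OF ga g(1) S0 g(2)] .
    show "\<exists>g\<in>carrier G. \<forall>n\<in>apt_stab act (carrier G) \<Sigma>0.
       ((g <#\<^bsub>G\<^esub> (n <#\<^bsub>G\<^esub> apt_fix act (carrier G) \<Sigma>0)) #>\<^bsub>G\<^esub> inv\<^bsub>G\<^esub> g) \<inter> H \<noteq> {}"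
    proof (intro bexI[OF _ g(1)] ballI)
      fix n assume "n \<in> apt_stab act (carrier G) \<Sigma>0"
      then have n: "n \<in> carrier G" "act n ` \<Sigma>0 = \<Sigma>0" unfolding apt_stab_def by auto
      have ni: "act (inv\<^bsub>G\<^esub> n) ` \<Sigma>0 = \<Sigma>0" using img_inv[OF ga n(1) S0 n(2)] .
      have "act g C \<in> \<Sigma>" "act g (act n C) \<in> \<Sigma>" using g n C by auto
      then obtain h where h: "h \<in> H" "act h ` \<Sigma> = \<Sigma>" "act h (act g C) = act g (act n C)"
        using tr unfolding apt_stab_def by blast
      have hG: "h \<in> carrier G" using h HG by blast
      define x where "x = inv\<^bsub>G\<^esub> n \<otimes>\<^bsub>G\<^esub> (inv\<^bsub>G\<^esub> g \<otimes>\<^bsub>G\<^esub> (h \<otimes>\<^bsub>G\<^esub> g))"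
      have xG: "x \<in> carrier G" unfolding x_def using n g hG by auto
      have gi': "inv\<^bsub>G\<^esub> g \<in> carrier G" "inv\<^bsub>G\<^esub> n \<in> carrier G" using g n by auto
      have hg: "h \<otimes>\<^bsub>G\<^esub> g \<in> carrier G" using hG g by auto
      have igh: "inv\<^bsub>G\<^esub> g \<otimes>\<^bsub>G\<^esub> (h \<otimes>\<^bsub>G\<^esub> g) \<in> carrier G" using hg gi' by auto
      have a1: "act (h \<otimes>\<^bsub>G\<^esub> g) ` \<Sigma>0 = \<Sigma>"
        using img_comp[OF ga hG g(1) S0] g(2) h(2) by simp
      have a2: "act (inv\<^bsub>G\<^esub> g \<otimes>\<^bsub>G\<^esub> (h \<otimes>\<^bsub>G\<^esub> g)) ` \<Sigma>0 = \<Sigma>0"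
        using img_comp[OF ga gi'(1) hg S0] a1 gi by simp
      have xS: "act x ` \<Sigma>0 = \<Sigma>0"
        unfolding x_def using img_comp[OF ga gi'(2) igh S0] a2 ni by simp
      have CC: "C \<in> Ch" using C S0 by blast
      have gC: "act g C \<in> Ch" using ei[OF g(1) CC] .
      have nC: "act n C \<in> Ch" using ei[OF n(1) CC] .
      have b1: "act (h \<otimes>\<^bsub>G\<^esub> g) C = act g (act n C)"
        using cr[OF CC hG g(1)] h(3) by simp
      have b2: "act (inv\<^bsub>G\<^esub> g \<otimes>\<^bsub>G\<^esub> (h \<otimes>\<^bsub>G\<^esub> g)) C = act n C"
        using cr[OF CC gi'(1) hg] b1 ia[OF g(1) nC] by simp
      have xC: "act x C = C"
        unfolding x_def using cr[OF CC gi'(2) igh] b2 ia[OF n(1) CC] by simp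
      have xT: "x \<in> apt_fix act (carrier G) \<Sigma>0"
        unfolding apt_fix_def apt_stab_def
      proof (simp add: xG xS, intro ballI)
        fix D assume D: "D \<in> \<Sigma>0"
        have D1: "act x D \<in> \<Sigma>0" using D xS by blast
        have "\<delta> C (act x D) = \<delta> C D" using tp xG CC D S0 xC by (metis (no_types, lifting) subsetD)
        then show "act x D = D" using apt_inj[OF gW assms(4) C D1 D] by blast
      qed
      have "h = g \<otimes>\<^bsub>G\<^esub> (n \<otimes>\<^bsub>G\<^esub> x) \<otimes>\<^bsub>G\<^esub> inv\<^bsub>G\<^esub> g"
      proof -
        have e1: "n \<otimes>\<^bsub>G\<^esub> x = inv\<^bsub>G\<^esub> g \<otimes>\<^bsub>G\<^esub> (h \<otimes>\<^bsub>G\<^esub> g)"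
          unfolding x_def using m_assoc[OF n(1) gi'(2) igh] r_inv[OF n(1)] l_one[OF igh] by simp
        have e2: "g \<otimes>\<^bsub>G\<^esub> (n \<otimes>\<^bsub>G\<^esub> x) = h \<otimes>\<^bsub>G\<^esub> g"
          unfolding e1 using m_assoc[OF g(1) gi'(1) hg] r_inv[OF g(1)] l_one[OF hg] by simp
        have "g \<otimes>\<^bsub>G\<^esub> (n \<otimes>\<^bsub>G\<^esub> x) \<otimes>\<^bsub>G\<^esub> inv\<^bsub>G\<^esub> g = h"
          unfolding e2 using m_assoc[OF hG g(1) gi'(1)] r_inv[OF g(1)] r_one[OF hG] by simp
        then show ?thesis by simp
      qed
      moreover have "g \<otimes>\<^bsub>G\<^esub> (n \<otimes>\<^bsub>G\<^esub> x) \<otimes>\<^bsub>G\<^esub> inv\<^bsub>G\<^esub> g \<in> (g <#\<^bsub>G\<^esub> (n <#\<^bsub>G\<^esub> apt_fix act (carrier G) \<Sigma>0)) #>\<^bsub>G\<^esub> inv\<^bsub>G\<^esub> g"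
        unfolding l_coset_def r_coset_def using xT by blast
      ultimately show "((g <#\<^bsub>G\<^esub> (n <#\<^bsub>G\<^esub> apt_fix act (carrier G) \<Sigma>0)) #>\<^bsub>G\<^esub> inv\<^bsub>G\<^esub> g) \<inter> H \<noteq> {}"
        using h(1) by auto
    qed
  next
    assume "\<exists>g\<in>carrier G. \<forall>n\<in>apt_stab act (carrier G) \<Sigma>0.
       ((g <#\<^bsub>G\<^esub> (n <#\<^bsub>G\<^esub> apt_fix act (carrier G) \<Sigma>0)) #>\<^bsub>G\<^esub> inv\<^bsub>G\<^esub> g) \<inter> H \<noteq> {}"
    then obtain g where g: "g \<in> carrier G" and gn: "\<forall>n\<in>apt_stab act (carrier G) \<Sigma>0.
       ((g <#\<^bsub>G\<^esub> (n <#\<^bsub>G\<^esub> apt_fix act (carrier G) \<Sigma>0)) #>\<^bsub>G\<^esub> inv\<^bsub>G\<^esub> g) \<inter> H \<noteq> {}" by blast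
    define \<Sigma> where "\<Sigma> = act g ` \<Sigma>0"
    have A: "is_apartment W Ch \<delta> \<Sigma>"
    proof -
      obtain f where f: "f \<in> carrier W \<rightarrow> Ch" "\<Sigma>0 = f ` carrier W"
        "\<forall>u\<in>carrier W. \<forall>v\<in>carrier W. \<delta> (f u) (f v) = inv\<^bsub>W\<^esub> u \<otimes>\<^bsub>W\<^esub> v"
        using assms(4) unfolding is_apartment_def by blast
      show ?thesis unfolding is_apartment_def
      proof (rule exI[of _ "act g \<circ> f"], intro conjI)
        show "act g \<circ> f \<in> carrier W \<rightarrow> Ch"
        proof
          fix x assume "x \<in> carrier W"
          then have "f x \<in> Ch" using f(1) by blast
          then show "(act g \<circ> f) x \<in> Ch" using ei[OF g] by simp
        qed
        show "\<Sigma> = (act g \<circ> f) ` carrier W" unfolding \<Sigma>_def f(2) by (rule image_comp)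
        show "\<forall>u\<in>carrier W. \<forall>v\<in>carrier W. \<delta> ((act g \<circ> f) u) ((act g \<circ> f) v) = inv\<^bsub>W\<^esub> u \<otimes>\<^bsub>W\<^esub> v"
        proof (intro ballI)
          fix u v assume uv: "u \<in> carrier W" "v \<in> carrier W"
          have "f u \<in> Ch" "f v \<in> Ch" using f(1) uv by auto
          then have "\<delta> (act g (f u)) (act g (f v)) = \<delta> (f u) (f v)" using tp g by blast
          then show "\<delta> ((act g \<circ> f) u) ((act g \<circ> f) v) = inv\<^bsub>W\<^esub> u \<otimes>\<^bsub>W\<^esub> v" using f(3) uv by simp
        qed
      qed
    qed
    have gi: "act (inv\<^bsub>G\<^esub> g) ` \<Sigma> = \<Sigma>0" using img_inv[OF ga g S0] \<Sigma>_def by blast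
    have "\<forall>C\<in>\<Sigma>. \<forall>D\<in>\<Sigma>. \<exists>h\<in>apt_stab act H \<Sigma>. act h C = D"
    proof (intro ballI)
      fix C D assume "C \<in> \<Sigma>" "D \<in> \<Sigma>"
      then obtain C0 D0 where CD: "C0 \<in> \<Sigma>0" "D0 \<in> \<Sigma>0" "C = act g C0" "D = act g D0"
        unfolding \<Sigma>_def by blast
      obtain n where n: "n \<in> carrier G" "act n ` \<Sigma>0 = \<Sigma>0" "act n C0 = D0"
        using ST[OF assms(4) assms(4) CD(1,2)] by blast
      then have "n \<in> apt_stab act (carrier G) \<Sigma>0" unfolding apt_stab_def by blast
      then obtain h where hH: "h \<in> H" and
        hc: "h \<in> (g <#\<^bsub>G\<^esub> (n <#\<^bsub>G\<^esub> apt_fix act (carrier G) \<Sigma>0)) #>\<^bsub>G\<^esub> inv\<^bsub>G\<^esub> g" using gn by blast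
      then obtain t where t: "t \<in> apt_fix act (carrier G) \<Sigma>0" and ht: "h = g \<otimes>\<^bsub>G\<^esub> (n \<otimes>\<^bsub>G\<^esub> t) \<otimes>\<^bsub>G\<^esub> inv\<^bsub>G\<^esub> g"
        unfolding l_coset_def r_coset_def by blast
      have tG: "t \<in> carrier G" "act t ` \<Sigma>0 = \<Sigma>0" "\<forall>C\<in>\<Sigma>0. act t C = C"
        using t unfolding apt_fix_def apt_stab_def by auto
      have SS: "\<Sigma> \<subseteq> Ch" using apt_sub A by blast
      have ht': "h = g \<otimes>\<^bsub>G\<^esub> (n \<otimes>\<^bsub>G\<^esub> (t \<otimes>\<^bsub>G\<^esub> inv\<^bsub>G\<^esub> g))" using ht g n tG by (simp add: m_assoc[OF g m_closed[OF n(1) tG(1)] inv_closed[OF g]] m_assoc[OF n(1) tG(1) inv_closed[OF g]])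
      have ig: "inv\<^bsub>G\<^esub> g \<in> carrier G" using g by simp
      have tig: "t \<otimes>\<^bsub>G\<^esub> inv\<^bsub>G\<^esub> g \<in> carrier G" using tG(1) ig by simp
      have ntig: "n \<otimes>\<^bsub>G\<^esub> (t \<otimes>\<^bsub>G\<^esub> inv\<^bsub>G\<^esub> g) \<in> carrier G" using n(1) tig by simp
      have c1: "act (t \<otimes>\<^bsub>G\<^esub> inv\<^bsub>G\<^esub> g) ` \<Sigma> = \<Sigma>0"
        using img_comp[OF ga tG(1) ig SS] gi tG(2) by simp
      have c2: "act (n \<otimes>\<^bsub>G\<^esub> (t \<otimes>\<^bsub>G\<^esub> inv\<^bsub>G\<^esub> g)) ` \<Sigma> = \<Sigma>0"
        using img_comp[OF ga n(1) tig SS] c1 n(2) by simp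
      have "act h ` \<Sigma> = \<Sigma>"
        unfolding ht' using img_comp[OF ga g ntig SS] c2 \<Sigma>_def by simp
      moreover have "act h C = D"
      proof -
        have CC: "C0 \<in> Ch" using CD(1) S0 by blast
        have gC: "act g C0 \<in> Ch" using ei[OF g CC] .
        have d1: "act (t \<otimes>\<^bsub>G\<^esub> inv\<^bsub>G\<^esub> g) C = C0"
          using cr[OF gC tG(1) ig] CD(3) ia[OF g CC] tG(3) CD(1) by simp
        have d2: "act (n \<otimes>\<^bsub>G\<^esub> (t \<otimes>\<^bsub>G\<^esub> inv\<^bsub>G\<^esub> g)) C = D0"
          using cr[OF gC n(1) tig] CD(3) d1 n(3) by simp
        show ?thesis unfolding ht' using cr[OF gC g ntig] CD(3,4) d2 by simp
      qed
      ultimately show "\<exists>h\<in>apt_stab act H \<Sigma>. act h C = D"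
        using hH unfolding apt_stab_def by blast
    qed
    then show "weakly_transitive W Ch \<delta> act H"
      unfolding weakly_transitive_def using A by blast
  qed
qed

end
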